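(* In a network satisfying (H1) and (H2) containing the two connected components $Y+S_0\rightleftarrows U_1\to\cdots\rightleftarrows U_L\to Y+S_L$ and $\widetilde Y+S_L\rightleftarrows V_L\to\widetilde Y+S_{L-1}\rightleftarrows\cdots\rightleftarrows V_1\to\widetilde Y+S_0$ ($L\ge1$), with rate constants as in the context, fix $1\le n\le L$ and $0\le k\le n-1$. Let $\ell$ be the minimal positive integer such that a monomial $y^r v_{n-k}$ with some $r\ge0$ appears in $s_n^{(\ell)}$. Then $\ell=2k+1$, $r=k$, and the coefficient of $y^k v_{n-k}$ in $s_n^{(2k+1)}$ is \[\tilde b_{n-k}\prod_{j=0}^{k-1}a_{n-j}\,c_{n-j}\] (empty product $=1$).
   Context: Species are capital letters, concentrations lower-case letters. Mass-action system: $\dot{\mathbf{x}}=\sum_{y\to y'}k_{yy'}\mathbf{x}^y(y'-y)$, rates $k_{yy'}>0$. Total derivative: $\dot\varphi=\sum_i\frac{\partial\varphi}{\partial x_i}\dot x_i$ with $\dot x_i$ replaced by the right-hand side; $\varphi^{(\ell)}$ the $\ell$-th iterate; a monomial appears if its coefficient (a polynomial in rate constants) is nonzero. (H1) Every connected component has the form $Y+S_0\rightleftarrows U_1\to\cdots\rightleftarrows U_L\to Y+S_L$ (reactions $Y+S_{j-1}\to U_j$, $U_j\to Y+S_{j-1}$, $U_j\to Y+S_j$), unique enzyme; intermediates distinct throughout the network; non-intermediates of a component pairwise distinct but may appear in other components; each complex in a unique component. $\mathscr{S}_U$ = substrates/products of the component of intermediate $U$. (H2) A partition $\mathscr{S}^{(0)}\sqcup\cdots\sqcup\mathscr{S}^{(M)}$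 ($M\ge2$, nonempty, $\mathscr{S}^{(0)}$ the intermediates) with: for each intermediate $U$ with enzyme $Y$, some $\alpha\ge1$ has $\mathscr{S}_U\subseteq\mathscr{S}^{(\alpha)}$, $Y\notin\mathscr{S}^{(\alpha)}$. Rates: $Y+S_{j-1}\to U_j$: $a_j$; $U_j\to Y+S_{j-1}$: $b_j$; $U_j\to Y+S_j$: $c_j$; $\widetilde Y+S_j\to V_j$: $\tilde a_j$; $V_j\to\widetilde Y+S_j$: $\tilde b_j$; $V_j\to\widetilde Y+S_{j-1}$: $\tilde c_j$ ($1\le j\le L$). *)

theory Defs
  imports "HOL-Library.Poly_Mapping"
begin

text \<open>A polynomial in variables of type 'v is a finitely supported map from monomials
(finitely supported exponent vectors 'v \<Rightarrow>0 nat) to integer coefficients; the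
convolution product of HOL-Library.Poly_Mapping makes this the polynomial ring.\<close>

type_synonym 'v mpoly = "('v \<Rightarrow>\<^sub>0 nat) \<Rightarrow>\<^sub>0 int"

definition mp_var :: "'v \<Rightarrow> 'v mpoly" where
  "mp_var v = Poly_Mapping.single (Poly_Mapping.single v 1) 1"

definition mp_monom :: "('v \<Rightarrow>\<^sub>0 nat) \<Rightarrow> int \<Rightarrow> 'v mpoly" where
  "mp_monom m c = Poly_Mapping.single m c"

definition mp_pderiv :: "'v \<Rightarrow> 'v mpoly \<Rightarrow> 'v mpoly" where
  "mp_pderiv v p = (\<Sum>m\<in>Poly_Mapping.keys p.
      mp_monom (m - Poly_Mapping.single v 1) (int (Poly_Mapping.lookup m v) * Poly_Mapping.lookup p m))"

text \<open>Polynomial variables: concentrations of species (Inl s) and rate constants,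
one for each reaction, indexed by reaction labels (Inr r).\<close>

datatype rkind = RA | RB | RC

text \<open>A network is given by a finite set C of components; component c has enzyme
enz c, substrates sub c 0, ..., sub c (len c), intermediates imd c 1, ..., imd c (len c),
and reactions
  (c,j,RA):  enz c + sub c (j-1) \<rightarrow> imd c j   (rate a_j)
  (c,j,RB):  imd c j \<rightarrow> enz c + sub c (j-1)   (rate b_j)
  (c,j,RC):  imd c j \<rightarrow> enz c + sub c j       (rate c_j)
for 1 \<le> j \<le> len c.  Complexes are lists of species (as multisets).\<close>

type_synonym 'c rlabel = "'c \<times> nat \<times> rkind"

definition rlabels :: "'c set \<Rightarrow> ('c \<Rightarrow> nat) \<Rightarrow> 'c rlabel set" where
  "rlabels C len = {(c, j, \<kappa>). c \<in> C \<and> 1 \<le> j \<and> j \<le> len c}"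

fun reactant :: "('c \<Rightarrow> 's) \<Rightarrow> ('c \<Rightarrow> nat \<Rightarrow> 's) \<Rightarrow> ('c \<Rightarrow> nat \<Rightarrow> 's) \<Rightarrow> 'c rlabel \<Rightarrow> 's list" where
  "reactant enz sub imd (c, j, RA) = [enz c, sub c (j - 1)]"
| "reactant enz sub imd (c, j, RB) = [imd c j]"
| "reactant enz sub imd (c, j, RC) = [imd c j]"

fun product :: "('c \<Rightarrow> 's) \<Rightarrow> ('c \<Rightarrow> nat \<Rightarrow> 's) \<Rightarrow> ('c \<Rightarrow> nat \<Rightarrow> 's) \<Rightarrow> 'c rlabel \<Rightarrow> 's list" where
  "product enz sub imd (c, j, RA) = [imd c j]"
| "product enz sub imd (c, j, RB) = [enz c, sub c (j - 1)]"
| "product enz sub imd (c, j, RC) = [enz c, sub c j]"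

definition cmon :: "'s list \<Rightarrow> ('s + 'r \<Rightarrow>\<^sub>0 nat)" where
  "cmon y = sum_list (map (\<lambda>s. Poly_Mapping.single (Inl s) 1) y)"

definition complex_of :: "'s list \<Rightarrow> 's \<Rightarrow>\<^sub>0 nat" where
  "complex_of y = sum_list (map (\<lambda>s. Poly_Mapping.single s 1) y)"

definition species :: "'c set \<Rightarrow> ('c \<Rightarrow> 's) \<Rightarrow> ('c \<Rightarrow> nat \<Rightarrow> 's) \<Rightarrow> ('c \<Rightarrow> nat \<Rightarrow> 's)
    \<Rightarrow> ('c \<Rightarrow> nat) \<Rightarrow> 's set" where
  "species C enz sub imd len =
     enz ` C \<union> {sub c j | c j. c \<in> C \<and> j \<le> len c} \<union> {imd c j | c j. c \<in> C \<and> 1 \<le> j \<and> j \<le> len c}"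

definition intermediates :: "'c set \<Rightarrow> ('c \<Rightarrow> nat \<Rightarrow> 's) \<Rightarrow> ('c \<Rightarrow> nat) \<Rightarrow> 's set" where
  "intermediates C imd len = {imd c j | c j. c \<in> C \<and> 1 \<le> j \<and> j \<le> len c}"

definition H1 :: "'c set \<Rightarrow> ('c \<Rightarrow> 's) \<Rightarrow> ('c \<Rightarrow> nat \<Rightarrow> 's) \<Rightarrow> ('c \<Rightarrow> nat \<Rightarrow> 's)
    \<Rightarrow> ('c \<Rightarrow> nat) \<Rightarrow> bool" where
  "H1 C enz sub imd len \<longleftrightarrow>
     finite C \<and>
     (\<forall>c\<in>C. 1 \<le> len c) \<and>
     \<comment> \<open>intermediates are distinct throughout the network: each occurs only as
        the intermediate of one component at one position, and is no enzyme or substrate\<close>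
     (\<forall>c\<in>C. \<forall>c'\<in>C. \<forall>j j'. 1 \<le> j \<and> j \<le> len c \<and> 1 \<le> j' \<and> j' \<le> len c' \<and> imd c j = imd c' j'
         \<longrightarrow> c = c' \<and> j = j') \<and>
     (\<forall>c\<in>C. \<forall>j. 1 \<le> j \<and> j \<le> len c \<longrightarrow> imd c j \<notin> enz ` C \<union> {sub c' i | c' i. c' \<in> C \<and> i \<le> len c'}) \<and>
     \<comment> \<open>non-intermediates of one component are pairwise distinct\<close>
     (\<forall>c\<in>C. inj_on (sub c) {0..len c} \<and> enz c \<notin> sub c ` {0..len c}) \<and>
     \<comment> \<open>each complex lies in a unique component\<close>
     (\<forall>c\<in>C. \<forall>c'\<in>C. \<forall>j j'. j \<le> len c \<and> j' \<le> len c' \<and>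
         complex_of [enz c, sub c j] = complex_of [enz c', sub c' j'] \<longrightarrow> c = c')"

definition H2 :: "'c set \<Rightarrow> ('c \<Rightarrow> 's) \<Rightarrow> ('c \<Rightarrow> nat \<Rightarrow> 's) \<Rightarrow> ('c \<Rightarrow> nat \<Rightarrow> 's)
    \<Rightarrow> ('c \<Rightarrow> nat) \<Rightarrow> bool" where
  "H2 C enz sub imd len \<longleftrightarrow>
     (\<exists>(M::nat) (cls :: 's \<Rightarrow> nat). 2 \<le> M \<and>
        cls ` species C enz sub imd len = {0..M} \<and>
        (\<forall>s\<in>species C enz sub imd len. cls s = 0 \<longleftrightarrow> s \<in> intermediates C imd len) \<and>
        (\<forall>c\<in>C. \<exists>\<alpha>. 1 \<le> \<alpha> \<and> (\<forall>j\<le>len c. cls (sub c j) = \<alpha>) \<and> cls (enz c) \<noteq> \<alpha>))"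

definition mavf :: "'c set \<Rightarrow> ('c \<Rightarrow> 's) \<Rightarrow> ('c \<Rightarrow> nat \<Rightarrow> 's) \<Rightarrow> ('c \<Rightarrow> nat \<Rightarrow> 's)
    \<Rightarrow> ('c \<Rightarrow> nat) \<Rightarrow> 's \<Rightarrow> ('s + 'c rlabel) mpoly" where
  "mavf C enz sub imd len i = (\<Sum>\<rho>\<in>rlabels C len.
      mp_monom (Poly_Mapping.single (Inr \<rho>) 1 + cmon (reactant enz sub imd \<rho>))
        (int (count_list (product enz sub imd \<rho>) i) - int (count_list (reactant enz sub imd \<rho>) i)))"

definition tderiv :: "'c set \<Rightarrow> ('c \<Rightarrow> 's) \<Rightarrow> ('c \<Rightarrow> nat \<Rightarrow> 's) \<Rightarrow> ('c \<Rightarrow> nat \<Rightarrow> 's)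
    \<Rightarrow> ('c \<Rightarrow> nat) \<Rightarrow> ('s + 'c rlabel) mpoly \<Rightarrow> ('s + 'c rlabel) mpoly" where
  "tderiv C enz sub imd len \<phi> = (\<Sum>i\<in>species C enz sub imd len.
      mp_pderiv (Inl i) \<phi> * mavf C enz sub imd len i)"

text \<open>The concentration monomial x^m appears in p iff its coefficient (a polynomial in the
rate constants) is nonzero, i.e. some monomial of p has species part m.\<close>
definition species_part_eq :: "('s + 'r \<Rightarrow>\<^sub>0 nat) \<Rightarrow> ('s + 'r \<Rightarrow>\<^sub>0 nat) \<Rightarrow> bool" where
  "species_part_eq \<mu> m \<longleftrightarrow> (\<forall>i. Poly_Mapping.lookup \<mu> (Inl i) = Poly_Mapping.lookup m (Inl i))"

definition appears :: "('s + 'r) mpoly \<Rightarrow> ('s + 'r \<Rightarrow>\<^sub>0 nat) \<Rightarrow> bool" where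
  "appears p m \<longleftrightarrow> (\<exists>\<mu>\<in>Poly_Mapping.keys p. species_part_eq \<mu> m)"

text \<open>The coefficient of x^m in p (a polynomial in the rate constants only) equals the
monomial q (given as exponent vector of rate variables) with coefficient 1.\<close>
definition xcoeff_is_monomial :: "('s + 'r) mpoly \<Rightarrow> ('s + 'r \<Rightarrow>\<^sub>0 nat) \<Rightarrow> ('s + 'r \<Rightarrow>\<^sub>0 nat) \<Rightarrow> bool" where
  "xcoeff_is_monomial p m q \<longleftrightarrow>
     (\<forall>\<mu>. species_part_eq \<mu> m \<longrightarrow> Poly_Mapping.lookup p \<mu> = (if \<mu> = m + q then 1 else 0))"

definition rvar :: "'r \<Rightarrow> ('s + 'r \<Rightarrow>\<^sub>0 nat)" where
  "rvar r = Poly_Mapping.single (Inr r) 1"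

end

theory Submission
  imports Defs
begin


lemma lookup_cmon_Inl: "Poly_Mapping.lookup (cmon y :: ('s + 'r \<Rightarrow>\<^sub>0 nat)) (Inl s) = count_list y s"
  by (induct y) (auto simp: cmon_def lookup_add lookup_single when_def)

lemma lookup_cmon_Inr: "Poly_Mapping.lookup (cmon y :: ('s + 'r \<Rightarrow>\<^sub>0 nat)) (Inr r) = 0"
  by (induct y) (auto simp: cmon_def lookup_add lookup_single when_def)

lemma lookup_tderiv:
  "Poly_Mapping.lookup (tderiv C enz sub imd len p) \<mu>' =
   (\<Sum>i\<in>species C enz sub imd len. \<Sum>m\<in>Poly_Mapping.keys p. \<Sum>\<rho>\<in>rlabels C len.
     (if m - Poly_Mapping.single (Inl i) 1 + (Poly_Mapping.single (Inr \<rho>) 1 + cmon (reactant enz sub imd \<rho>)) = \<mu>'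
      then int (Poly_Mapping.lookup m (Inl i)) * Poly_Mapping.lookup p m *
        (int (count_list (product enz sub imd \<rho>) i) - int (count_list (reactant enz sub imd \<rho>) i))
      else 0))"
  unfolding tderiv_def mp_pderiv_def mavf_def mp_monom_def
  by (simp add: lookup_sum sum_product mult_single lookup_single when_def)



definition good :: "'s \<Rightarrow> nat \<Rightarrow> 's \<Rightarrow> 's \<Rightarrow> nat" where
  "good Y a x = (\<lambda>s. if s = Y then a else if s = x then 1 else 0)"
definition Bad :: "'s \<Rightarrow> ('s \<Rightarrow> nat) \<Rightarrow> bool" where
  "Bad Y f \<longleftrightarrow> (\<exists>s t. s \<noteq> Y \<and> t \<noteq> Y \<and> s \<noteq> t \<and> 1 \<le> f s \<and> 1 \<le> f t) \<or> (\<exists>s. s \<noteq> Y \<and> 2 \<le> f s)"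
definition stp :: "('s \<Rightarrow> nat) \<Rightarrow> 's \<Rightarrow> 's list \<Rightarrow> 's \<Rightarrow> nat" where
  "stp f i R = (\<lambda>s. f s - (if s = i then 1 else 0) + count_list R s)"
definition sp :: "('s + 'r \<Rightarrow>\<^sub>0 nat) \<Rightarrow> 's \<Rightarrow> nat" where
  "sp \<mu> = (\<lambda>s. Poly_Mapping.lookup \<mu> (Inl s))"

lemma count_ge1: "z \<in> set xs \<Longrightarrow> 1 \<le> count_list xs z"
  using count_list_0_iff[of xs z] by simp

lemma Bad_not_good: "x \<noteq> Y \<Longrightarrow> Bad Y f \<Longrightarrow> f \<noteq> good Y a x"
  unfolding Bad_def good_def by (auto split: if_splits)

lemma good_inj: "x \<noteq> Y \<Longrightarrow> x' \<noteq> Y \<Longrightarrow> good Y a x = good Y a' x' \<Longrightarrow> a = a' \<and> x = x'"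
  unfolding good_def by (metis zero_neq_one)

lemma good_pos: "1 \<le> good Y a x i \<Longrightarrow> i = Y \<or> i = x"
  unfolding good_def by (auto split: if_splits)

lemma Bad_step:
  assumes "Bad Y f" "1 \<le> f i" "z \<in> set R" "z \<noteq> Y"
  shows "Bad Y (stp f i R)"
proof -
  have cz: "1 \<le> count_list R z" using assms(3) by (rule count_ge1)
  from assms(1) show ?thesis
  proof (unfold Bad_def, elim disjE exE conjE)
    fix s t assume st: "s \<noteq> Y" "t \<noteq> Y" "s \<noteq> t" "1 \<le> f s" "1 \<le> f t"
    show "(\<exists>s t. s \<noteq> Y \<and> t \<noteq> Y \<and> s \<noteq> t \<and> 1 \<le> stp f i R s \<and> 1 \<le> stp f i R t) \<or> (\<exists>s. s \<noteq> Y \<and> 2 \<le> stp f i R s)"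
    proof (cases "i = s")
      case True
      show ?thesis
      proof (cases "z = t")
        case True
        then have "2 \<le> stp f i R t" using st cz \<open>i = s\<close> by (simp add: stp_def)
        then show ?thesis using st by blast
      next
        case False
        then have "1 \<le> stp f i R t" "1 \<le> stp f i R z" using st cz \<open>i = s\<close> by (auto simp add: stp_def)
        then show ?thesis using st False assms(4) by blast
      qed
    next
      case False
      then have "1 \<le> stp f i R s" using st by (simp add: stp_def)
      show ?thesis
      proof (cases "i = t")
        case True
        show ?thesis
        proof (cases "z = s")
          case True
          then have "2 \<le> stp f i R s" using st cz \<open>i = t\<close> by (simp add: stp_def)
          then show ?thesis using st by blast
        next
          case False
          then have "1 \<le> stp f i R z" using st cz \<open>i = t\<close> by (auto simp add: stp_def)
          then show ?thesis using st False assms(4) \<open>1 \<le> stp f i R s\<close> by blast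
        qed
      next
        case False
        then have "1 \<le> stp f i R t" using st by (simp add: stp_def)
        then show ?thesis using st \<open>1 \<le> stp f i R s\<close> by blast
      qed
    qed
  next
    fix s assume st: "s \<noteq> Y" "2 \<le> f s"
    show "(\<exists>s t. s \<noteq> Y \<and> t \<noteq> Y \<and> s \<noteq> t \<and> 1 \<le> stp f i R s \<and> 1 \<le> stp f i R t) \<or> (\<exists>s. s \<noteq> Y \<and> 2 \<le> stp f i R s)"
    proof (cases "i = s")
      case False
      then have "2 \<le> stp f i R s" using st by (simp add: stp_def)
      then show ?thesis using st by blast
    next
      case True
      show ?thesis
      proof (cases "z = s")
        case True
        then have "2 \<le> stp f i R s" using st cz \<open>i = s\<close> by (simp add: stp_def)
        then show ?thesis using st by blast
      next
        case False
        then have "1 \<le> stp f i R s" "1 \<le> stp f i R z" using st cz \<open>i = s\<close> by (auto simp add: stp_def)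
        then show ?thesis using st False assms(4) by blast
      qed
    qed
  qed
qed

lemma good_Y_step:
  assumes "x \<noteq> Y" "z \<in> set R" "z \<noteq> Y"
  shows "Bad Y (stp (good Y a x) Y R)"
proof -
  have cz: "1 \<le> count_list R z" using assms(2) by (rule count_ge1)
  have x1: "1 \<le> stp (good Y a x) Y R x" using assms(1) by (simp add: stp_def good_def)
  show ?thesis
  proof (cases "z = x")
    case True
    then have "2 \<le> stp (good Y a x) Y R x" using assms cz by (simp add: stp_def good_def)
    then show ?thesis using assms(1) unfolding Bad_def by blast
  next
    case False
    then have "1 \<le> stp (good Y a x) Y R z" using assms cz by (simp add: stp_def good_def)
    then show ?thesis using assms(1,3) x1 False unfolding Bad_def by blast
  qed
qed

lemma stp_two_bad:
  assumes "e \<noteq> Y" "b \<noteq> Y" "e \<noteq> b"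
  shows "Bad Y (stp (good Y a x) x [e, b])"
proof -
  have "1 \<le> stp (good Y a x) x [e, b] e" "1 \<le> stp (good Y a x) x [e, b] b"
    using assms by (auto simp: stp_def good_def)
  then show ?thesis using assms unfolding Bad_def by blast
qed

lemma stp_YB: "b \<noteq> Y \<Longrightarrow> x \<noteq> Y \<Longrightarrow> stp (good Y a x) x [Y, b] = good Y (Suc a) b"
  by (auto simp: stp_def good_def fun_eq_iff)
lemma stp_BY: "b \<noteq> Y \<Longrightarrow> x \<noteq> Y \<Longrightarrow> stp (good Y a x) x [b, Y] = good Y (Suc a) b"
  by (auto simp: stp_def good_def fun_eq_iff)
lemma stp_W: "w \<noteq> Y \<Longrightarrow> x \<noteq> Y \<Longrightarrow> stp (good Y a x) x [w] = good Y a w"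
  by (auto simp: stp_def good_def fun_eq_iff)

lemma sp_succ:
  assumes "1 \<le> Poly_Mapping.lookup m (Inl i)"
  shows "sp (m - Poly_Mapping.single (Inl i) 1 + (Poly_Mapping.single (Inr \<rho>) 1 + cmon R)) = stp (sp m) i R"
  using assms by (auto simp: sp_def stp_def fun_eq_iff lookup_add lookup_minus lookup_single when_def lookup_cmon_Inl)



locale netw =
  fixes C :: "'c set" and enz :: "'c \<Rightarrow> 's" and sub imd :: "'c \<Rightarrow> nat \<Rightarrow> 's"
    and len :: "'c \<Rightarrow> nat" and c1 c2 :: 'c and L n k :: nat
  assumes h1: "H1 C enz sub imd len"
    and h2: "H2 C enz sub imd len"
    and c1: "c1 \<in> C" and c2: "c2 \<in> C"
    and L: "1 \<le> L" and len1: "len c1 = L" and len2: "len c2 = L"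
    and rev: "\<forall>i\<le>L. sub c2 i = sub c1 (L - i)"
    and n1: "1 \<le> n" and n2: "n \<le> L" and k: "k < n"
begin

abbreviation "Y \<equiv> enz c1"
abbreviation "Yt \<equiv> enz c2"
abbreviation "S \<equiv> sub c1"
abbreviation "U \<equiv> imd c1"
abbreviation "j2 \<equiv> L + 1 - (n - k)"
abbreviation "V \<equiv> imd c2 j2"
abbreviation "RL \<equiv> rlabels C len"
abbreviation "SP \<equiv> species C enz sub imd len"
abbreviation "Re \<equiv> reactant enz sub imd"
abbreviation "Pr \<equiv> product enz sub imd"
definition net :: "'s \<Rightarrow> 'c rlabel \<Rightarrow> int" where
  "net i \<rho> = int (count_list (Pr \<rho>) i) - int (count_list (Re \<rho>) i)"

lemma H1all: "finite C \<and> (\<forall>c\<in>C. 1 \<le> len c) \<and>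
     (\<forall>c\<in>C. \<forall>c'\<in>C. \<forall>j j'. 1 \<le> j \<and> j \<le> len c \<and> 1 \<le> j' \<and> j' \<le> len c' \<and> imd c j = imd c' j'
         \<longrightarrow> c = c' \<and> j = j') \<and>
     (\<forall>c\<in>C. \<forall>j. 1 \<le> j \<and> j \<le> len c \<longrightarrow> imd c j \<notin> enz ` C \<union> {sub c' i | c' i. c' \<in> C \<and> i \<le> len c'}) \<and>
     (\<forall>c\<in>C. inj_on (sub c) {0..len c} \<and> enz c \<notin> sub c ` {0..len c}) \<and>
     (\<forall>c\<in>C. \<forall>c'\<in>C. \<forall>j j'. j \<le> len c \<and> j' \<le> len c' \<and>
         complex_of [enz c, sub c j] = complex_of [enz c', sub c' j'] \<longrightarrow> c = c')"
  using h1 unfolding H1_def .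
lemmas H1parts = H1all[THEN conjunct1] H1all[THEN conjunct2, THEN conjunct2, THEN conjunct1]
  H1all[THEN conjunct2, THEN conjunct2, THEN conjunct2, THEN conjunct1]
  H1all[THEN conjunct2, THEN conjunct2, THEN conjunct2, THEN conjunct2, THEN conjunct1]
  H1all[THEN conjunct2, THEN conjunct2, THEN conjunct2, THEN conjunct2, THEN conjunct2]

lemma finC: "finite C" by (rule H1parts(1))

lemma imd_inj: "c \<in> C \<Longrightarrow> c' \<in> C \<Longrightarrow> 1 \<le> j \<Longrightarrow> j \<le> len c \<Longrightarrow> 1 \<le> j' \<Longrightarrow> j' \<le> len c'
   \<Longrightarrow> imd c j = imd c' j' \<Longrightarrow> c = c' \<and> j = j'"
  using H1parts(2) by blast

lemma imd_ne_enz: "c \<in> C \<Longrightarrow> 1 \<le> j \<Longrightarrow> j \<le> len c \<Longrightarrow> c' \<in> C \<Longrightarrow> imd c j \<noteq> enz c'"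
  using H1parts(3) by blast

lemma imd_ne_sub: "c \<in> C \<Longrightarrow> 1 \<le> j \<Longrightarrow> j \<le> len c \<Longrightarrow> c' \<in> C \<Longrightarrow> i \<le> len c' \<Longrightarrow> imd c j \<noteq> sub c' i"
  using H1parts(3) by blast

lemma sub_inj: "c \<in> C \<Longrightarrow> i \<le> len c \<Longrightarrow> i' \<le> len c \<Longrightarrow> sub c i = sub c i' \<Longrightarrow> i = i'"
  using H1parts(4) unfolding inj_on_def by auto

lemma enz_ne_sub: "c \<in> C \<Longrightarrow> i \<le> len c \<Longrightarrow> enz c \<noteq> sub c i"
  using H1parts(4) by auto

lemma cplx: "c \<in> C \<Longrightarrow> c' \<in> C \<Longrightarrow> j \<le> len c \<Longrightarrow> j' \<le> len c' \<Longrightarrow> enz c = enz c'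
   \<Longrightarrow> sub c j = sub c' j' \<Longrightarrow> c = c'"
  using H1parts(5) by metis

lemma cls: assumes "c \<in> C" "j \<le> len c" "sub c j = Y" "j' \<le> len c" "i \<le> L"
  shows "sub c j' \<noteq> S i"
proof
  assume eq: "sub c j' = S i"
  obtain cl :: "'s \<Rightarrow> nat" where M: "\<forall>c\<in>C. \<exists>\<alpha>. 1 \<le> \<alpha> \<and> (\<forall>j\<le>len c. cl (sub c j) = \<alpha>) \<and> cl (enz c) \<noteq> \<alpha>"
    using h2 unfolding H2_def by blast
  obtain \<alpha>1 where a1: "\<forall>j\<le>len c1. cl (sub c1 j) = \<alpha>1" "cl (enz c1) \<noteq> \<alpha>1" using M c1 by blast
  obtain \<alpha> where a: "\<forall>j\<le>len c. cl (sub c j) = \<alpha>" using M assms(1) by blast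
  have "cl Y = \<alpha>" using a assms(2,3) by metis
  moreover have "cl (sub c j') = \<alpha>" using a assms(4) by blast
  moreover have "cl (S i) = \<alpha>1" using a1 assms(5) len1 by simp
  ultimately show False using eq a1(2) by simp
qed

lemma Y_ne_S: "i \<le> L \<Longrightarrow> Y \<noteq> S i" using enz_ne_sub[OF c1] len1 by simp
lemma S_inj: "i \<le> L \<Longrightarrow> i' \<le> L \<Longrightarrow> S i = S i' \<longleftrightarrow> i = i'" using sub_inj[OF c1] len1 by auto
lemma sub2: "i \<le> L \<Longrightarrow> sub c2 (L - i) = S i" using rev by simp
lemma Yt_ne_S: "i \<le> L \<Longrightarrow> Yt \<noteq> S i" using enz_ne_sub[OF c2, of "L - i"] len2 sub2 by simp
lemma S_ne_imd: "i \<le> L \<Longrightarrow> c \<in> C \<Longrightarrow> 1 \<le> j \<Longrightarrow> j \<le> len c \<Longrightarrow> S i \<noteq> imd c j"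
  using imd_ne_sub[OF _ _ _ c1, of c j i] len1 by auto
lemma Y_ne_imd: "c \<in> C \<Longrightarrow> 1 \<le> j \<Longrightarrow> j \<le> len c \<Longrightarrow> Y \<noteq> imd c j"
  using imd_ne_enz[OF _ _ _ c1] by metis
lemma Yt_ne_imd: "c \<in> C \<Longrightarrow> 1 \<le> j \<Longrightarrow> j \<le> len c \<Longrightarrow> Yt \<noteq> imd c j"
  using imd_ne_enz[OF _ _ _ c2] by metis

lemma finRL: "finite RL"
proof -
  have fu: "finite (UNIV :: rkind set)"
  proof -
    have "(UNIV :: rkind set) = {RA, RB, RC}" by (auto intro: rkind.exhaust)
    then show ?thesis by (metis finite_insert finite.emptyI)
  qed
  have "RL \<subseteq> (\<lambda>((c,j),\<kappa>). (c,j,\<kappa>)) ` ((SIGMA c:C. {1..len c}) \<times> UNIV)"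
    unfolding rlabels_def by force
  moreover have "finite ((SIGMA c:C. {1..len c}) \<times> (UNIV :: rkind set))"
    using finC fu by auto
  ultimately show ?thesis by (meson finite_imageI finite_subset)
qed

lemma finSP: "finite SP"
proof -
  have a: "{sub c j | c j. c \<in> C \<and> j \<le> len c} = (\<lambda>(c,j). sub c j) ` (SIGMA c:C. {..len c})" by auto
  have b: "{imd c j | c j. c \<in> C \<and> 1 \<le> j \<and> j \<le> len c} = (\<lambda>(c,j). imd c j) ` (SIGMA c:C. {1..len c})" by fastforce
  show ?thesis unfolding species_def a b using finC by auto
qed

lemma net_mem: "net i \<rho> \<noteq> 0 \<Longrightarrow> i \<in> set (Re \<rho>) \<or> i \<in> set (Pr \<rho>)"
  by (cases "i \<in> set (Re \<rho>)"; cases "i \<in> set (Pr \<rho>)"; simp add: net_def)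

lemma RL_cases: assumes "\<rho> \<in> RL"
  obtains c j \<kappa> where "\<rho> = (c, j, \<kappa>)" "c \<in> C" "1 \<le> j" "j \<le> len c"
  using assms unfolding rlabels_def by auto

lemma Re_nonY: assumes "\<rho> \<in> RL" shows "\<exists>z\<in>set (Re \<rho>). z \<noteq> Y"
proof -
  obtain c j \<kappa> where r: "\<rho> = (c, j, \<kappa>)" "c \<in> C" "1 \<le> j" "j \<le> len c" using assms by (rule RL_cases)
  show ?thesis
  proof (cases \<kappa>)
    case RA
    have "enz c \<noteq> sub c (j - 1)" using enz_ne_sub[OF r(2), of "j-1"] r by simp
    then show ?thesis using r RA by auto
  qed (use r Y_ne_imd[OF r(2-4)] in auto)
qed

end


context netw begin

definition A :: "nat \<Rightarrow> nat \<Rightarrow> 's \<Rightarrow> bool" where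
  "A l a x \<longleftrightarrow> (\<exists>i\<le>n. x = S i \<and> 2*n \<le> l + 2*i \<and> n \<le> a + i \<and> a + n \<le> l + i) \<or>
     (\<exists>c\<in>C. \<exists>j. 1 \<le> j \<and> j \<le> len c \<and> x = imd c j \<and>
        (\<exists>i\<le>n. (S i = enz c \<or> S i = sub c (j-1) \<or> S i = sub c j) \<and> 2*n+1 \<le> l+2*i \<and> n \<le> a+i \<and> a+n+1 \<le> l+i))"

definition Inv :: "nat \<Rightarrow> ('s \<Rightarrow> nat) \<Rightarrow> bool" where
  "Inv l f \<longleftrightarrow> Bad Y f \<or> (\<exists>a x. x \<noteq> Y \<and> f = good Y a x \<and> A l a x)"

lemma AS: "i \<le> n \<Longrightarrow> 2*n \<le> l + 2*i \<Longrightarrow> n \<le> a + i \<Longrightarrow> a + n \<le> l + i \<Longrightarrow> A l a (S i)"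
  unfolding A_def by blast

lemma AI: "c \<in> C \<Longrightarrow> 1 \<le> j \<Longrightarrow> j \<le> len c \<Longrightarrow> i \<le> n \<Longrightarrow> (S i = enz c \<or> S i = sub c (j-1) \<or> S i = sub c j)
  \<Longrightarrow> 2*n+1 \<le> l+2*i \<Longrightarrow> n \<le> a+i \<Longrightarrow> a+n+1 \<le> l+i \<Longrightarrow> A l a (imd c j)"
  unfolding A_def
  apply (rule disjI2)
  apply (rule bexI[where x=c])
   apply (rule exI[where x=j])
   apply (intro conjI)
      apply assumption+
     apply (rule refl)
    apply (rule exI[where x=i])
    apply simp
   apply assumption
  done

lemma A_cases:
  assumes "A l a x"
  obtains (S) i where "i \<le> n" "x = S i" "2*n \<le> l + 2*i" "n \<le> a + i" "a + n \<le> l + i"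
  | (I) c j i where "c \<in> C" "1 \<le> j" "j \<le> len c" "x = imd c j" "i \<le> n"
      "S i = enz c \<or> S i = sub c (j-1) \<or> S i = sub c j" "2*n+1 \<le> l+2*i" "n \<le> a+i" "a+n+1 \<le> l+i"
  using assms unfolding A_def by (elim disjE bexE exE conjE) fast+

lemma trA1:
  assumes c: "c \<in> C" "1 \<le> j" "j \<le> len c" and e: "enz c = Y" and A: "A l a x"
    and x: "x = sub c (j-1) \<or> x = imd c j"
  shows "A (Suc l) (Suc a) (sub c (j-1))"
  using A
proof (cases rule: A_cases)
  case (S i)
  have "S i \<noteq> imd c j" using S_ne_imd[of i c j] c S(1) n2 by simp
  then have eq: "S i = sub c (j-1)" using x S by auto
  have "A (Suc l) (Suc a) (S i)" by (rule AS) (use S in arith)+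
  then show ?thesis using eq by simp
next
  case (I c' j' i)
  have "x \<noteq> sub c (j-1)" using imd_ne_sub[OF I(1-3) c(1), of "j-1"] I(4) c by simp
  then have "x = imd c j" using x by simp
  then have cc: "c' = c" "j' = j" using imd_inj[OF I(1) c(1) I(2,3) c(2,3)] I(4) by auto
  have iL: "i \<le> L" using I(5) n2 by simp
  have "S i \<noteq> enz c" using Y_ne_S[OF iL] e by simp
  then consider "S i = sub c (j-1)" | "S i = sub c j" using I(6) cc by auto
  then show ?thesis
  proof cases
    case 1
    have "A (Suc l) (Suc a) (S i)" by (rule AS) (use I in arith)+
    then show ?thesis using 1 by simp
  next
    case 2
    have "c = c1" using cplx[OF c(1) c1 c(3), of i] iL len1 e 2 by simp
    then have "j = i" using sub_inj[OF c1, of j i] 2 c iL len1 by simp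
    then have "sub c (j-1) = S (i-1)" "1 \<le> i" using \<open>c = c1\<close> c by auto
    moreover have "A (Suc l) (Suc a) (S (i-1))"
      by (rule AS) (use I \<open>1 \<le> i\<close> in arith)+
    ultimately show ?thesis by simp
  qed
qed

lemma trA2:
  assumes c: "c \<in> C" "1 \<le> j" "j \<le> len c" and e: "sub c (j-1) = Y" and A: "A l a x"
    and x: "x = enz c \<or> x = imd c j"
  shows "A (Suc l) (Suc a) (enz c)"
  using A
proof (cases rule: A_cases)
  case (S i)
  have "S i \<noteq> imd c j" using S_ne_imd[of i c j] c S(1) n2 by simp
  then have eq: "S i = enz c" using x S by auto
  have "A (Suc l) (Suc a) (S i)" by (rule AS) (use S in arith)+
  then show ?thesis using eq by simp
next
  case (I c' j' i)
  have "x \<noteq> enz c" using imd_ne_enz[OF I(1-3) c(1)] I(4) by simp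
  then have "x = imd c j" using x by simp
  then have cc: "c' = c" "j' = j" using imd_inj[OF I(1) c(1) I(2,3) c(2,3)] I(4) by auto
  have iL: "i \<le> L" using I(5) n2 by simp
  have "S i \<noteq> sub c (j-1)" using Y_ne_S[OF iL] e by simp
  moreover have "S i \<noteq> sub c j"
  proof -
    have "j - 1 \<le> len c" using c by simp
    from cls[OF c(1) this e c(3) iL] show ?thesis by simp
  qed
  ultimately have eq: "S i = enz c" using I(6) cc by auto
  have "A (Suc l) (Suc a) (S i)" by (rule AS) (use I in arith)+
  then show ?thesis using eq by simp
qed

lemma trA3:
  assumes c: "c \<in> C" "1 \<le> j" "j \<le> len c" and A: "A l a x"
    and x: "x = imd c j \<or> x = enz c \<or> x = sub c (j-1) \<or> x = sub c j"
  shows "A (Suc l) a (imd c j)"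
  using A
proof (cases rule: A_cases)
  case (S i)
  have "S i \<noteq> imd c j" using S_ne_imd[of i c j] c S(1) n2 by simp
  then have "S i = enz c \<or> S i = sub c (j-1) \<or> S i = sub c j" using x S by auto
  then show ?thesis by (rule AI[OF c S(1)]) (use S in simp_all)
next
  case (I c' j' i)
  have "x \<noteq> enz c" using imd_ne_enz[OF I(1-3) c(1)] I(4) by simp
  moreover have "x \<noteq> sub c (j-1)" using imd_ne_sub[OF I(1-3) c(1), of "j-1"] I(4) c by simp
  moreover have "x \<noteq> sub c j" using imd_ne_sub[OF I(1-3) c(1), of "j"] I(4) c by simp
  ultimately have "x = imd c j" using x by simp
  then have cc: "c' = c" "j' = j" using imd_inj[OF I(1) c(1) I(2,3) c(2,3)] I(4) by auto
  show ?thesis by (rule AI[OF c I(5)]) (use I cc in simp_all)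
qed

lemma Inv_step:
  assumes Inv: "Inv l f" and \<rho>: "\<rho> \<in> RL" and fi: "1 \<le> f i" and nt: "net i \<rho> \<noteq> 0"
  shows "Inv (Suc l) (stp f i (Re \<rho>))"
proof -
  obtain z where z: "z \<in> set (Re \<rho>)" "z \<noteq> Y" using Re_nonY[OF \<rho>] by blast
  from Inv consider "Bad Y f" | a x where "x \<noteq> Y" "f = good Y a x" "A l a x" unfolding Inv_def by blast
  then show ?thesis
  proof cases
    case 1
    then show ?thesis using Bad_step[OF 1 fi z] unfolding Inv_def by blast
  next
    case (2 a x)
    note g = 2
    have "i = Y \<or> i = x" using good_pos fi g by metis
    then show ?thesis
    proof
      assume "i = Y"
      then show ?thesis using good_Y_step[OF g(1) z] g unfolding Inv_def by blast
    next
      assume ix: "i = x"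
      obtain c j \<kappa> where r: "\<rho> = (c, j, \<kappa>)" "c \<in> C" "1 \<le> j" "j \<le> len c" using \<rho> by (rule RL_cases)
      have mem: "x \<in> set (Re \<rho>) \<or> x \<in> set (Pr \<rho>)" using net_mem[OF nt] ix by simp
      have ens: "enz c \<noteq> sub c (j-1)" using enz_ne_sub[OF r(2), of "j-1"] r by simp
      have iY: "imd c j \<noteq> Y" using Y_ne_imd[OF r(2-4)] by simp
      show ?thesis
      proof (cases \<kappa>)
        case RA
        have Re: "Re \<rho> = [enz c, sub c (j-1)]" using r RA by simp
        have mem': "x = enz c \<or> x = sub c (j-1) \<or> x = imd c j" using mem r RA by auto
        consider "enz c = Y" | "sub c (j-1) = Y" | "enz c \<noteq> Y" "sub c (j-1) \<noteq> Y" by blast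
        then show ?thesis
        proof cases
          case 1
          have b: "sub c (j-1) \<noteq> Y" using ens 1 by simp
          have "stp f i (Re \<rho>) = good Y (Suc a) (sub c (j-1))"
            using stp_YB[OF b g(1)] 1 Re g ix by simp
          moreover have "A (Suc l) (Suc a) (sub c (j-1))"
            by (rule trA1[OF r(2-4) 1 g(3)]) (use mem' 1 g in auto)
          ultimately show ?thesis using b unfolding Inv_def by blast
        next
          case 3
          then show ?thesis using stp_two_bad[OF 3 ens] Re g ix unfolding Inv_def by simp
        next
          case 2
          have b: "enz c \<noteq> Y" using ens 2 by simp
          have "stp f i (Re \<rho>) = good Y (Suc a) (enz c)"
            using stp_BY[OF b g(1)] 2 Re g ix by simp
          moreover have "A (Suc l) (Suc a) (enz c)"
            by (rule trA2[OF r(2-4) 2 g(3)]) (use mem' 2 g in auto)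
          ultimately show ?thesis using b unfolding Inv_def by blast
        qed
      next
        case RB
        have Re: "Re \<rho> = [imd c j]" using r RB by simp
        have "stp f i (Re \<rho>) = good Y a (imd c j)" using stp_W[OF iY g(1)] Re g ix by simp
        moreover have "A (Suc l) a (imd c j)"
          by (rule trA3[OF r(2-4) g(3)]) (use mem r RB g ix in auto)
        ultimately show ?thesis using iY unfolding Inv_def by blast
      next
        case RC
        have Re: "Re \<rho> = [imd c j]" using r RC by simp
        have "stp f i (Re \<rho>) = good Y a (imd c j)" using stp_W[OF iY g(1)] Re g ix by simp
        moreover have "A (Suc l) a (imd c j)"
          by (rule trA3[OF r(2-4) g(3)]) (use mem r RC g ix in auto)
        ultimately show ?thesis using iY unfolding Inv_def by blast
      qed
    qed
  qed
qed

end


context netw begin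

abbreviation "D \<equiv> tderiv C enz sub imd len"

definition IHp :: "nat \<Rightarrow> ('s + 'c rlabel \<Rightarrow>\<^sub>0 nat) \<Rightarrow> ('s \<Rightarrow> nat) \<Rightarrow> ('s + 'c rlabel) mpoly \<Rightarrow> bool" where
  "IHp l K T p \<longleftrightarrow> (\<forall>\<mu>\<in>Poly_Mapping.keys p. Inv l (sp \<mu>)) \<and>
     (\<forall>\<mu>. sp \<mu> = T \<longrightarrow> Poly_Mapping.lookup p \<mu> = (if \<mu> = K then 1 else 0))"

lemma lookup_D: "Poly_Mapping.lookup (D p) \<mu>' = (\<Sum>i\<in>SP. \<Sum>m\<in>Poly_Mapping.keys p. \<Sum>\<rho>\<in>RL.
     (if m - Poly_Mapping.single (Inl i) 1 + (Poly_Mapping.single (Inr \<rho>) 1 + cmon (Re \<rho>)) = \<mu>'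
      then int (Poly_Mapping.lookup m (Inl i)) * Poly_Mapping.lookup p m * net i \<rho> else 0))"
  unfolding net_def by (rule lookup_tderiv)

lemma keysD:
  assumes "\<mu>' \<in> Poly_Mapping.keys (D p)"
  shows "\<exists>i\<in>SP. \<exists>m\<in>Poly_Mapping.keys p. \<exists>\<rho>\<in>RL.
    m - Poly_Mapping.single (Inl i) 1 + (Poly_Mapping.single (Inr \<rho>) 1 + cmon (Re \<rho>)) = \<mu>' \<and>
    Poly_Mapping.lookup m (Inl i) \<noteq> 0 \<and> net i \<rho> \<noteq> 0"
proof -
  define F where "F i m \<rho> = (if m - Poly_Mapping.single (Inl i) 1 + (Poly_Mapping.single (Inr \<rho>) 1 + cmon (Re \<rho>)) = \<mu>'
      then int (Poly_Mapping.lookup m (Inl i)) * Poly_Mapping.lookup p m * net i \<rho> else 0)" for i m \<rho>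
  have L: "Poly_Mapping.lookup (D p) \<mu>' = (\<Sum>i\<in>SP. \<Sum>m\<in>Poly_Mapping.keys p. \<Sum>\<rho>\<in>RL. F i m \<rho>)"
    unfolding F_def net_def by (rule lookup_tderiv)
  have "Poly_Mapping.lookup (D p) \<mu>' \<noteq> 0" using assms by (simp add: in_keys_iff)
  then have "(\<Sum>i\<in>SP. \<Sum>m\<in>Poly_Mapping.keys p. \<Sum>\<rho>\<in>RL. F i m \<rho>) \<noteq> 0" using L by simp
  then obtain i where i: "i \<in> SP" and s1: "(\<Sum>m\<in>Poly_Mapping.keys p. \<Sum>\<rho>\<in>RL. F i m \<rho>) \<noteq> 0"
    by (rule sum.not_neutral_contains_not_neutral)
  obtain m where m: "m \<in> Poly_Mapping.keys p" and s2: "(\<Sum>\<rho>\<in>RL. F i m \<rho>) \<noteq> 0"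
    using s1 by (rule sum.not_neutral_contains_not_neutral)
  obtain \<rho> where \<rho>: "\<rho> \<in> RL" and s3: "F i m \<rho> \<noteq> 0"
    using s2 by (rule sum.not_neutral_contains_not_neutral)
  have e: "m - Poly_Mapping.single (Inl i) 1 + (Poly_Mapping.single (Inr \<rho>) 1 + cmon (Re \<rho>)) = \<mu>'"
    using s3 unfolding F_def by (simp split: if_splits)
  have "int (Poly_Mapping.lookup m (Inl i)) * Poly_Mapping.lookup p m * net i \<rho> \<noteq> 0"
    using s3 e unfolding F_def by simp
  then have "Poly_Mapping.lookup m (Inl i) \<noteq> 0" "net i \<rho> \<noteq> 0" by auto
  then show ?thesis using i m \<rho> e by blast
qed

lemma trans_generic:
  assumes IH: "IHp l K T p"
    and pred: "\<And>f i \<rho>. Inv l f \<Longrightarrow> \<rho> \<in> RL \<Longrightarrow> 1 \<le> f i \<Longrightarrow> net i \<rho> \<noteq> 0 \<Longrightarrow> stp f i (Re \<rho>) = T'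
       \<Longrightarrow> f = T \<and> i = i0 \<and> \<rho> = \<rho>0"
    and i0: "i0 \<in> SP" and r0: "\<rho>0 \<in> RL"
    and key: "K - Poly_Mapping.single (Inl i0) 1 + (Poly_Mapping.single (Inr \<rho>0) 1 + cmon (Re \<rho>0)) = K'"
    and coef: "int (Poly_Mapping.lookup K (Inl i0)) * net i0 \<rho>0 = 1"
    and spK: "sp K = T"
  shows "IHp (Suc l) K' T' (D p)"
proof -
  have IH1: "\<And>\<mu>. \<mu> \<in> Poly_Mapping.keys p \<Longrightarrow> Inv l (sp \<mu>)" using IH unfolding IHp_def by blast
  have IH2: "\<And>\<mu>. sp \<mu> = T \<Longrightarrow> Poly_Mapping.lookup p \<mu> = (if \<mu> = K then 1 else 0)"
    using IH unfolding IHp_def by blast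
  have pK: "Poly_Mapping.lookup p K = 1" using IH2[OF spK] by simp
  then have Kk: "K \<in> Poly_Mapping.keys p" by (simp add: in_keys_iff)
  have part1: "\<forall>\<mu>'\<in>Poly_Mapping.keys (D p). Inv (Suc l) (sp \<mu>')"
  proof
    fix \<mu>' assume "\<mu>' \<in> Poly_Mapping.keys (D p)"
    then obtain i m \<rho> where i: "i \<in> SP" and m: "m \<in> Poly_Mapping.keys p" and \<rho>: "\<rho> \<in> RL"
      and eq: "m - Poly_Mapping.single (Inl i) 1 + (Poly_Mapping.single (Inr \<rho>) 1 + cmon (Re \<rho>)) = \<mu>'"
      and mi: "Poly_Mapping.lookup m (Inl i) \<noteq> 0" and nt: "net i \<rho> \<noteq> 0"
      using keysD by blast
    have "sp \<mu>' = stp (sp m) i (Re \<rho>)" using sp_succ[of m i \<rho> "Re \<rho>"] mi eq by simp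
    moreover have "Inv (Suc l) (stp (sp m) i (Re \<rho>))"
      by (rule Inv_step[OF IH1[OF m] \<rho> _ nt]) (use mi in \<open>simp add: sp_def\<close>)
    ultimately show "Inv (Suc l) (sp \<mu>')" by simp
  qed
  have part2: "Poly_Mapping.lookup (D p) \<mu>' = (if \<mu>' = K' then 1 else 0)" if sp': "sp \<mu>' = T'" for \<mu>'
  proof -
    define v :: int where "v = (if K' = \<mu>' then 1 else 0)"
    have trm: "(if m - Poly_Mapping.single (Inl i) 1 + (Poly_Mapping.single (Inr \<rho>) 1 + cmon (Re \<rho>)) = \<mu>'
      then int (Poly_Mapping.lookup m (Inl i)) * Poly_Mapping.lookup p m * net i \<rho> else 0)
      = (if i = i0 \<and> m = K \<and> \<rho> = \<rho>0 then v else 0)"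
      if m: "m \<in> Poly_Mapping.keys p" and \<rho>: "\<rho> \<in> RL" for i m \<rho>
    proof (cases "i = i0 \<and> m = K \<and> \<rho> = \<rho>0")
      case True
      then have "i = i0" "m = K" "\<rho> = \<rho>0" by auto
      then show ?thesis using key coef pK unfolding v_def by simp
    next
      case False
      show ?thesis
      proof (rule ccontr)
        assume ne: "\<not> ?thesis"
        then have eq: "m - Poly_Mapping.single (Inl i) 1 + (Poly_Mapping.single (Inr \<rho>) 1 + cmon (Re \<rho>)) = \<mu>'"
          and mi: "Poly_Mapping.lookup m (Inl i) \<noteq> 0" and nt: "net i \<rho> \<noteq> 0"
          using False by (auto split: if_splits)
        have "sp \<mu>' = stp (sp m) i (Re \<rho>)" using sp_succ[of m i \<rho> "Re \<rho>"] mi eq by simp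
        then have "sp m = T \<and> i = i0 \<and> \<rho> = \<rho>0"
          using pred[OF IH1[OF m] \<rho> _ nt] mi sp' by (simp add: sp_def)
        moreover then have "m = K" using IH2[of m] m by (auto simp: in_keys_iff split: if_splits)
        ultimately show False using False by simp
      qed
    qed
    have "Poly_Mapping.lookup (D p) \<mu>' = (\<Sum>i\<in>SP. \<Sum>m\<in>Poly_Mapping.keys p. \<Sum>\<rho>\<in>RL.
        (if i = i0 \<and> m = K \<and> \<rho> = \<rho>0 then v else 0))"
      unfolding lookup_D
    proof (intro sum.cong refl)
      fix i m \<rho> assume "m \<in> Poly_Mapping.keys p" "\<rho> \<in> RL"
      then show "(if m - Poly_Mapping.single (Inl i) 1 + (Poly_Mapping.single (Inr \<rho>) 1 + cmon (Re \<rho>)) = \<mu>'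
      then int (Poly_Mapping.lookup m (Inl i)) * Poly_Mapping.lookup p m * net i \<rho> else 0)
      = (if i = i0 \<and> m = K \<and> \<rho> = \<rho>0 then v else 0)" by (rule trm)
    qed
    also have "\<dots> = (\<Sum>i\<in>SP. \<Sum>m\<in>Poly_Mapping.keys p. (if i = i0 \<and> m = K then v else 0))"
    proof (intro sum.cong refl)
      fix i m
      show "(\<Sum>\<rho>\<in>RL. if i = i0 \<and> m = K \<and> \<rho> = \<rho>0 then v else 0) = (if i = i0 \<and> m = K then v else 0)"
      proof (cases "i = i0 \<and> m = K")
        case True then show ?thesis by (simp add: finRL r0)
      next
        case False then show ?thesis by (intro trans[OF sum.neutral]) auto
      qed
    qed
    also have "\<dots> = (\<Sum>i\<in>SP. (if i = i0 then v else 0))"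
    proof (intro sum.cong refl)
      fix i
      show "(\<Sum>m\<in>Poly_Mapping.keys p. if i = i0 \<and> m = K then v else 0) = (if i = i0 then v else 0)"
      proof (cases "i = i0")
        case True then show ?thesis by (simp add: Kk)
      next
        case False then show ?thesis by (intro trans[OF sum.neutral]) auto
      qed
    qed
    also have "\<dots> = v" by (simp add: finSP i0)
    finally show ?thesis unfolding v_def by auto
  qed
  show ?thesis unfolding IHp_def using part1 part2 by blast
qed

end


context netw begin

lemma classify:
  assumes Inv: "Inv l f" and \<rho>: "\<rho> \<in> RL" and fi: "1 \<le> f i" and nt: "net i \<rho> \<noteq> 0"
    and st: "stp f i (Re \<rho>) = good Y a' x'" and x': "x' \<noteq> Y"
  obtains (cA) a c j where "f = good Y a i" "i \<noteq> Y" "A l a i" "\<rho> = (c,j,RA)" "c \<in> C" "1 \<le> j" "j \<le> len c"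
      "a' = Suc a"
      "(enz c = Y \<and> x' = sub c (j-1) \<and> (i = sub c (j-1) \<or> i = imd c j)) \<or>
       (sub c (j-1) = Y \<and> x' = enz c \<and> (i = enz c \<or> i = imd c j))"
  | (cB) a c j where "f = good Y a i" "i \<noteq> Y" "A l a i" "\<rho> = (c,j,RB)" "c \<in> C" "1 \<le> j" "j \<le> len c"
      "a' = a" "x' = imd c j" "i = imd c j \<or> i = enz c \<or> i = sub c (j-1)"
  | (cC) a c j where "f = good Y a i" "i \<noteq> Y" "A l a i" "\<rho> = (c,j,RC)" "c \<in> C" "1 \<le> j" "j \<le> len c"
      "a' = a" "x' = imd c j" "i = imd c j \<or> i = enz c \<or> i = sub c j"
proof -
  obtain z where z: "z \<in> set (Re \<rho>)" "z \<noteq> Y" using Re_nonY[OF \<rho>] by blast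
  from Inv consider "Bad Y f" | a x where "x \<noteq> Y" "f = good Y a x" "A l a x" unfolding Inv_def by blast
  then show thesis
  proof cases
    case 1
    then show ?thesis using Bad_step[OF 1 fi z] Bad_not_good[OF x'] st by blast
  next
    case (2 a x)
    note g = 2
    have "i = Y \<or> i = x" using good_pos fi g by metis
    moreover have "i \<noteq> Y"
    proof
      assume "i = Y"
      then show False using good_Y_step[OF g(1) z] g st Bad_not_good[OF x'] by blast
    qed
    ultimately have ix: "i = x" by blast
    obtain c j \<kappa> where r: "\<rho> = (c, j, \<kappa>)" "c \<in> C" "1 \<le> j" "j \<le> len c" using \<rho> by (rule RL_cases)
    have mem: "x \<in> set (Re \<rho>) \<or> x \<in> set (Pr \<rho>)" using net_mem[OF nt] ix by simp
    have ens: "enz c \<noteq> sub c (j-1)" using enz_ne_sub[OF r(2), of "j-1"] r by simp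
    have iY: "imd c j \<noteq> Y" using Y_ne_imd[OF r(2-4)] by simp
    show ?thesis
    proof (cases \<kappa>)
      case RA
      have Re: "Re \<rho> = [enz c, sub c (j-1)]" using r RA by simp
      have mem': "x = enz c \<or> x = sub c (j-1) \<or> x = imd c j" using mem r RA by auto
      consider "enz c = Y" | "sub c (j-1) = Y" | "enz c \<noteq> Y" "sub c (j-1) \<noteq> Y" by blast
      then show ?thesis
      proof cases
        case 1
        have b: "sub c (j-1) \<noteq> Y" using ens 1 by simp
        have "good Y a' x' = good Y (Suc a) (sub c (j-1))"
          using stp_YB[OF b g(1)] 1 Re g ix st by simp
        then have "a' = Suc a" "x' = sub c (j-1)" using good_inj[OF x' b] by auto
        then show ?thesis using cA[of a c j] g ix r RA 1 mem' by auto
      next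
        case 3
        then show ?thesis using stp_two_bad[OF 3 ens] Re g ix st Bad_not_good[OF x'] by auto
      next
        case 2
        have b: "enz c \<noteq> Y" using ens 2 by simp
        have "good Y a' x' = good Y (Suc a) (enz c)"
          using stp_BY[OF b g(1)] 2 Re g ix st by simp
        then have "a' = Suc a" "x' = enz c" using good_inj[OF x' b] by auto
        then show ?thesis using cA[of a c j] g ix r RA 2 mem' by auto
      qed
    next
      case RB
      have Re: "Re \<rho> = [imd c j]" using r RB by simp
      have "good Y a' x' = good Y a (imd c j)" using stp_W[OF iY g(1)] Re g ix st by simp
      then have "a' = a" "x' = imd c j" using good_inj[OF x' iY] by auto
      moreover have "x = imd c j \<or> x = enz c \<or> x = sub c (j-1)" using mem r RB by auto
      ultimately show ?thesis using cB[of a c j] g ix r RB by auto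
    next
      case RC
      have Re: "Re \<rho> = [imd c j]" using r RC by simp
      have "good Y a' x' = good Y a (imd c j)" using stp_W[OF iY g(1)] Re g ix st by simp
      then have "a' = a" "x' = imd c j" using good_inj[OF x' iY] by auto
      moreover have "x = imd c j \<or> x = enz c \<or> x = sub c j" using mem r RC by auto
      ultimately show ?thesis using cC[of a c j] g ix r RC by auto
    qed
  qed
qed

lemma A_S:
  assumes "i \<le> L" "A l a (S i)"
  shows "i \<le> n \<and> 2*n \<le> l + 2*i \<and> n \<le> a + i \<and> a + n \<le> l + i"
  using assms(2)
proof (cases rule: A_cases)
  case (S i')
  then have "i' = i" using S_inj[of i' i] assms(1) n2 by auto
  then show ?thesis using S by simp
next
  case (I c j i')
  then show ?thesis using S_ne_imd[OF assms(1) I(1-3)] by simp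
qed

lemma j2facts: "1 \<le> j2" "j2 \<le> L" "sub c2 (j2 - 1) = S (n-k)" "sub c2 j2 = S (n-k-1)"
proof -
  show "1 \<le> j2" "j2 \<le> L" using k n1 n2 by auto
  have "j2 - 1 = L - (n-k)" using k n2 by auto
  then show "sub c2 (j2 - 1) = S (n-k)" using sub2[of "n-k"] n2 by simp
  have "j2 = L - (n-k-1)" using k n2 by auto
  then show "sub c2 j2 = S (n-k-1)" using sub2[of "n-k-1"] n2 by simp
qed

lemma A_V:
  assumes "A l a V"
  shows "2*k+1 \<le> l \<and> (l = 2*k+1 \<longrightarrow> a = k)"
  using assms
proof (cases rule: A_cases)
  case (S i)
  have "j2 \<le> len c2" using j2facts len2 by simp
  moreover have "i \<le> L" using S(1) n2 by simp
  ultimately have "S i \<noteq> imd c2 j2" using S_ne_imd[OF _ c2 j2facts(1)] by blast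
  then show ?thesis using S by simp
next
  case (I c j i)
  have cc: "c = c2" "j = j2" using imd_inj[OF I(1) c2 I(2,3)] j2facts len2 I(4) by auto
  have iL: "i \<le> L" using I(5) n2 by simp
  have "S i \<noteq> Yt" using Yt_ne_S[OF iL] by simp
  then have "S i = S (n-k) \<or> S i = S (n-k-1)" using I(6) cc j2facts by auto
  then have "i = n-k \<or> i = n-k-1" using S_inj iL n2 by auto
  then show ?thesis using I k by auto
qed

lemma A_U:
  assumes "t < k" "A l a (U (n-t))"
  shows "2*t+1 \<le> l"
  using assms(2)
proof (cases rule: A_cases)
  case (S i)
  have "n - t \<le> len c1" "1 \<le> n - t" using len1 n2 assms(1) k by auto
  moreover have "i \<le> L" using S(1) n2 by simp
  ultimately have "S i \<noteq> imd c1 (n-t)" using S_ne_imd[OF _ c1] by blast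
  then show ?thesis using S by simp
next
  case (I c j i)
  have "n - t \<le> len c1" "1 \<le> n - t" using len1 n2 assms(1) k by auto
  then have cc: "c = c1" "j = n-t" using imd_inj[OF I(1) c1 I(2,3), of "n-t"] I(4) by auto
  have iL: "i \<le> L" using I(5) n2 by simp
  have "S i \<noteq> Y" using Y_ne_S[OF iL] by simp
  then have "S i = S (n-t-1) \<or> S i = S (n-t)" using I(6) cc by auto
  then have "i = n-t \<or> i = n-t-1" using S_inj iL n2 by auto
  then show ?thesis using I assms(1) k by auto
qed

lemma A_W:
  assumes "c \<in> C" "1 \<le> j" "j \<le> len c" "sub c (j-1) = Y" "A l a (imd c j)"
  shows "\<exists>i\<le>n. S i = enz c \<and> 2*n+1 \<le> l+2*i"
  using assms(5)
proof (cases rule: A_cases)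
  case (S i)
  then show ?thesis using S_ne_imd[of i c j] assms n2 by auto
next
  case (I c' j' i)
  have cc: "c' = c" "j' = j" using imd_inj[OF I(1) assms(1) I(2,3) assms(2,3)] I(4) by auto
  have iL: "i \<le> L" using I(5) n2 by simp
  have "S i \<noteq> sub c (j-1)" using Y_ne_S[OF iL] assms(4) by simp
  moreover have "S i \<noteq> sub c j"
  proof -
    have "j - 1 \<le> len c" using assms by simp
    from cls[OF assms(1) this assms(4) assms(3) iL] show ?thesis by simp
  qed
  ultimately have "S i = enz c" using I(6) cc by auto
  then show ?thesis using I by blast
qed

end


context netw begin

definition Q :: "nat \<Rightarrow> ('s + 'c rlabel \<Rightarrow>\<^sub>0 nat)" where
  "Q t = (\<Sum>j<t. rvar (c1, n - j, RA) + rvar (c1, n - j, RC))"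
definition Ke :: "nat \<Rightarrow> ('s + 'c rlabel \<Rightarrow>\<^sub>0 nat)" where
  "Ke t = Poly_Mapping.single (Inl Y) t + Poly_Mapping.single (Inl (S (n-t))) 1 + Q t"
definition Ko :: "nat \<Rightarrow> ('s + 'c rlabel \<Rightarrow>\<^sub>0 nat)" where
  "Ko t = Poly_Mapping.single (Inl Y) t + Poly_Mapping.single (Inl (U (n-t))) 1 + (Q t + rvar (c1, n-t, RC))"
definition KV :: "('s + 'c rlabel \<Rightarrow>\<^sub>0 nat)" where
  "KV = Poly_Mapping.single (Inl Y) k + Poly_Mapping.single (Inl V) 1 + (rvar (c2, j2, RB) + Q k)"

lemma lookup_rvar: "Poly_Mapping.lookup (rvar r :: ('s + 'c rlabel \<Rightarrow>\<^sub>0 nat)) x = (if x = Inr r then 1 else 0)"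
  by (auto simp: rvar_def lookup_single when_def)

lemma lookup_Q_Inl: "Poly_Mapping.lookup (Q t) (Inl s) = 0"
  by (simp add: Q_def lookup_sum lookup_add lookup_rvar)

lemma Q_Suc: "Q (Suc t) = Q t + rvar (c1, n-t, RA) + rvar (c1, n-t, RC)"
  by (simp add: Q_def add.assoc)

lemma SY: "i \<le> L \<Longrightarrow> S i \<noteq> Y" using Y_ne_S by metis

lemma U_valid: "t < k \<Longrightarrow> 1 \<le> n - t \<and> n - t \<le> len c1" using k n2 len1 by auto

lemma UY: "t < k \<Longrightarrow> U (n-t) \<noteq> Y" using Y_ne_imd[OF c1] U_valid by metis
lemma VY: "V \<noteq> Y" using Y_ne_imd[OF c2, of j2] j2facts len2 by metis
lemma US: "t < k \<Longrightarrow> i \<le> L \<Longrightarrow> U (n-t) \<noteq> S i" using S_ne_imd[OF _ c1] U_valid by metis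
lemma VS: "i \<le> L \<Longrightarrow> V \<noteq> S i" using S_ne_imd[OF _ c2, of i j2] j2facts len2 by metis

lemma sp_Ke: "t \<le> n \<Longrightarrow> sp (Ke t) = good Y t (S (n-t))"
  using SY[of "n-t"] n2 by (auto simp: sp_def good_def fun_eq_iff Ke_def lookup_add lookup_single when_def lookup_Q_Inl)

lemma sp_Ko: "t < k \<Longrightarrow> sp (Ko t) = good Y t (U (n-t))"
  using UY[of t] by (auto simp: sp_def good_def fun_eq_iff Ko_def lookup_add lookup_single when_def lookup_Q_Inl lookup_rvar)

lemma sp_KV: "sp KV = good Y k V"
  using VY by (auto simp: sp_def good_def fun_eq_iff KV_def lookup_add lookup_single when_def lookup_Q_Inl lookup_rvar)

lemma A_Yt: "\<not> A l a Yt"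
proof
  assume "A l a Yt"
  then show False
  proof (cases rule: A_cases)
    case (S i) then show ?thesis using Yt_ne_S[of i] n2 by simp
  next
    case (I c j i) then show ?thesis using Yt_ne_imd[of c j] by simp
  qed
qed

lemma S_in_SP: "i \<le> L \<Longrightarrow> S i \<in> SP"
  unfolding species_def using c1 len1 by blast

lemma U_in_SP: "t < k \<Longrightarrow> U (n-t) \<in> SP"
  unfolding species_def using c1 U_valid by blast

lemma in_RL: "c \<in> C \<Longrightarrow> 1 \<le> j \<Longrightarrow> j \<le> len c \<Longrightarrow> (c, j, \<kappa>) \<in> RL"
  unfolding rlabels_def by simp

lemma transE1:
  assumes t: "t < k" and IH: "IHp (2*t) (Ke t) (good Y t (S (n-t))) p"
  shows "IHp (Suc (2*t)) (Ko t) (good Y t (U (n-t))) (D p)"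
proof (rule trans_generic[OF IH _ S_in_SP in_RL[OF c1, of "n-t" RC]])
  show "n - t \<le> L" using n2 by simp
  show "1 \<le> n - t" "n - t \<le> len c1" using U_valid[OF t] by auto
  show "sp (Ke t) = good Y t (S (n-t))" using sp_Ke t k by simp
  have ntL: "n - t \<le> L" using n2 by simp
  have SU: "S (n-t) \<noteq> U (n-t)" using US[OF t ntL] by auto
  show "int (Poly_Mapping.lookup (Ke t) (Inl (S (n-t)))) * net (S (n-t)) (c1, n-t, RC) = 1"
    using SY[OF ntL] SU by (simp add: Ke_def lookup_add lookup_single when_def lookup_Q_Inl net_def)
  show "Ke t - Poly_Mapping.single (Inl (S (n-t))) 1 + (Poly_Mapping.single (Inr (c1, n-t, RC)) 1 + cmon (Re (c1, n-t, RC))) = Ko t"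
    by (rule poly_mapping_eqI) (auto simp: Ke_def Ko_def lookup_add lookup_minus lookup_single when_def
        lookup_Q_Inl lookup_rvar cmon_def split: sum.splits)
next
  fix f i \<rho>
  assume Inv: "Inv (2*t) f" and \<rho>: "\<rho> \<in> RL" and fi: "1 \<le> f i" and nt: "net i \<rho> \<noteq> 0"
    and st: "stp f i (Re \<rho>) = good Y t (U (n-t))"
  have Uv: "1 \<le> n - t" "n - t \<le> len c1" using U_valid[OF t] by auto
  show "f = good Y t (S (n-t)) \<and> i = S (n-t) \<and> \<rho> = (c1, n-t, RC)"
  using Inv \<rho> fi nt st UY[OF t] proof (cases rule: classify)
    case (cA a c j)
    have "j - 1 \<le> len c" using cA by simp
    then have "U (n-t) \<noteq> sub c (j-1)" "U (n-t) \<noteq> enz c"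
      using imd_ne_sub[OF c1 Uv cA(5)] imd_ne_enz[OF c1 Uv cA(5)] by auto
    then show ?thesis using cA(9) by auto
  next
    case (cB a c j)
    have cc: "c = c1" "j = n-t" using imd_inj[OF c1 cB(5) Uv cB(6,7)] cB(9) by auto
    have "i = U (n-t) \<or> i = S (n-t-1)" using cB(10) cB(2) cc by auto
    then show ?thesis
    proof
      assume "i = U (n-t)"
      then have "A (2*t) t (U (n-t))" using cB(3) cB(8) by simp
      from A_U[OF t this] show ?thesis by simp
    next
      assume "i = S (n-t-1)"
      then have AA: "A (2*t) t (S (n-t-1))" using cB(3) cB(8) by simp
      have "n-t-1 \<le> L" using n2 by simp
      from A_S[OF this AA] have False using n1 Uv by arith
      then show ?thesis by blast
    qed
  next
    case (cC a c j)
    have cc: "c = c1" "j = n-t" using imd_inj[OF c1 cC(5) Uv cC(6,7)] cC(9) by auto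
    have "i = U (n-t) \<or> i = S (n-t)" using cC(10) cC(2) cc by auto
    then show ?thesis
    proof
      assume "i = U (n-t)"
      then have "A (2*t) t (U (n-t))" using cC(3) cC(8) by simp
      from A_U[OF t this] show ?thesis by simp
    next
      assume "i = S (n-t)"
      then show ?thesis using cC(1) cC(4) cC(8) cc by auto
    qed
  qed
qed

lemma transE2:
  assumes IH: "IHp (2*k) (Ke k) (good Y k (S (n-k))) p"
  shows "IHp (Suc (2*k)) KV (good Y k V) (D p)"
proof (rule trans_generic[OF IH _ S_in_SP in_RL[OF c2, of j2 RB]])
  show "n - k \<le> L" using n2 by simp
  show "1 \<le> j2" "j2 \<le> len c2" using j2facts len2 by auto
  show "sp (Ke k) = good Y k (S (n-k))" using sp_Ke k by simp
  have Pr0: "Pr (c2, j2, RB) = [Yt, S (n-k)]" using j2facts by simp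
  have nkL: "n - k \<le> L" using n2 by simp
  show "int (Poly_Mapping.lookup (Ke k) (Inl (S (n-k)))) * net (S (n-k)) (c2, j2, RB) = 1"
    using SY[OF nkL] VS[OF nkL] Yt_ne_S[OF nkL] Pr0
    by (simp add: Ke_def lookup_add lookup_single when_def lookup_Q_Inl net_def)
  show "Ke k - Poly_Mapping.single (Inl (S (n-k))) 1 + (Poly_Mapping.single (Inr (c2, j2, RB)) 1 + cmon (Re (c2, j2, RB))) = KV"
    by (rule poly_mapping_eqI) (auto simp: Ke_def KV_def lookup_add lookup_minus lookup_single when_def
        lookup_Q_Inl lookup_rvar cmon_def split: sum.splits)
next
  fix f i \<rho>
  assume Inv: "Inv (2*k) f" and \<rho>: "\<rho> \<in> RL" and fi: "1 \<le> f i" and nt: "net i \<rho> \<noteq> 0"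
    and st: "stp f i (Re \<rho>) = good Y k V"
  have Vv: "1 \<le> j2" "j2 \<le> len c2" using j2facts len2 by auto
  show "f = good Y k (S (n-k)) \<and> i = S (n-k) \<and> \<rho> = (c2, j2, RB)"
  using Inv \<rho> fi nt st VY proof (cases rule: classify)
    case (cA a c j)
    have "j - 1 \<le> len c" using cA by simp
    then have "V \<noteq> sub c (j-1)" "V \<noteq> enz c"
      using imd_ne_sub[OF c2 Vv cA(5)] imd_ne_enz[OF c2 Vv cA(5)] by auto
    then show ?thesis using cA(9) by auto
  next
    case (cB a c j)
    have cc: "c = c2" "j = j2" using imd_inj[OF c2 cB(5) Vv cB(6,7)] cB(9) by auto
    have "i = V \<or> i = Yt \<or> i = S (n-k)" using cB(10) cc j2facts by auto
    then show ?thesis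
    proof (elim disjE)
      assume "i = V"
      then have "A (2*k) k V" using cB(3) cB(8) by simp
      from A_V[OF this] show ?thesis by simp
    next
      assume "i = Yt"
      then show ?thesis using A_Yt cB(3) by auto
    next
      assume "i = S (n-k)"
      then show ?thesis using cB(1) cB(4) cB(8) cc by auto
    qed
  next
    case (cC a c j)
    have cc: "c = c2" "j = j2" using imd_inj[OF c2 cC(5) Vv cC(6,7)] cC(9) by auto
    have "i = V \<or> i = Yt \<or> i = S (n-k-1)" using cC(10) cc j2facts by auto
    then show ?thesis
    proof (elim disjE)
      assume "i = V"
      then have "A (2*k) k V" using cC(3) cC(8) by simp
      from A_V[OF this] show ?thesis by simp
    next
      assume "i = Yt"
      then show ?thesis using A_Yt cC(3) by auto
    next
      assume "i = S (n-k-1)"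
      then have AA: "A (2*k) k (S (n-k-1))" using cC(3) cC(8) by simp
      have "n-k-1 \<le> L" using n2 by simp
      from A_S[OF this AA] have False using n1 k by arith
      then show ?thesis by blast
    qed
  qed
qed

lemma transO:
  assumes t: "t < k" and IH: "IHp (Suc (2*t)) (Ko t) (good Y t (U (n-t))) p"
  shows "IHp (Suc (Suc (2*t))) (Ke (Suc t)) (good Y (Suc t) (S (n - Suc t))) (D p)"
proof (rule trans_generic[OF IH _ U_in_SP[OF t] in_RL[OF c1, of "n-t" RA]])
  show "1 \<le> n - t" "n - t \<le> len c1" using U_valid[OF t] by auto
  show "sp (Ko t) = good Y t (U (n-t))" using sp_Ko t by simp
  have "n - t - 1 \<le> L" using n2 by simp
  then have US': "U (n-t) \<noteq> S (n-t-1)" using US[OF t] by blast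
  show "int (Poly_Mapping.lookup (Ko t) (Inl (U (n-t)))) * net (U (n-t)) (c1, n-t, RA) = 1"
    using UY[OF t] US' by (simp add: Ko_def lookup_add lookup_single when_def lookup_Q_Inl lookup_rvar net_def)
  have e: "n - Suc t = n - t - 1" by simp
  show "Ko t - Poly_Mapping.single (Inl (U (n-t))) 1 + (Poly_Mapping.single (Inr (c1, n-t, RA)) 1 + cmon (Re (c1, n-t, RA))) = Ke (Suc t)"
    unfolding e by (rule poly_mapping_eqI) (auto simp: Ke_def Ko_def Q_Suc lookup_add lookup_minus lookup_single when_def
        lookup_Q_Inl lookup_rvar cmon_def split: sum.splits)
next
  fix f i \<rho>
  assume Inv: "Inv (Suc (2*t)) f" and \<rho>: "\<rho> \<in> RL" and fi: "1 \<le> f i" and nt: "net i \<rho> \<noteq> 0"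
    and st: "stp f i (Re \<rho>) = good Y (Suc t) (S (n - Suc t))"
  have Uv: "1 \<le> n - t" "n - t \<le> len c1" using U_valid[OF t] by auto
  have sL: "n - Suc t \<le> L" using n2 by simp
  show "f = good Y t (U (n-t)) \<and> i = U (n-t) \<and> \<rho> = (c1, n-t, RA)"
  using Inv \<rho> fi nt st SY[OF sL] proof (cases rule: classify)
    case (cA a c j)
    have at: "a = t" using cA(8) by simp
    have jl: "j - 1 \<le> len c" using cA by simp
    from cA(9) show ?thesis
    proof (rule disjE)
      assume "enz c = Y \<and> S (n - Suc t) = sub c (j-1) \<and> (i = sub c (j-1) \<or> i = imd c j)"
      then have e: "enz c = Y" and x: "S (n - Suc t) = sub c (j-1)" and ii: "i = sub c (j-1) \<or> i = imd c j"
        by auto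
      have "c = c1" using cplx[OF cA(5) c1 jl, of "n - Suc t"] e x sL len1 by simp
      then have "j - 1 = n - Suc t" using sub_inj[OF c1, of "j-1" "n - Suc t"] x jl sL len1 by simp
      then have jj: "j = n - t" using cA(6) t k by auto
      from ii show ?thesis
      proof
        assume "i = sub c (j-1)"
        then have "i = S (n - Suc t)" using x by simp
        then have "A (Suc (2*t)) t (S (n - Suc t))" using cA(3) at by simp
        from A_S[OF sL this] have False using t k by arith
        then show ?thesis by blast
      next
        assume "i = imd c j"
        then show ?thesis using cA(1) cA(4) at jj \<open>c = c1\<close> by simp
      qed
    next
      assume "sub c (j-1) = Y \<and> S (n - Suc t) = enz c \<and> (i = enz c \<or> i = imd c j)"
      then have e: "sub c (j-1) = Y" and x: "S (n - Suc t) = enz c" and ii: "i = enz c \<or> i = imd c j"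
        by auto
      from ii show ?thesis
      proof
        assume "i = enz c"
        then have "i = S (n - Suc t)" using x by simp
        then have "A (Suc (2*t)) t (S (n - Suc t))" using cA(3) at by simp
        from A_S[OF sL this] have False using t k by arith
        then show ?thesis by blast
      next
        assume "i = imd c j"
        then obtain i' where i': "i' \<le> n" "S i' = enz c" "2*n+1 \<le> Suc (2*t) + 2*i'"
          using A_W[OF cA(5-7) e] cA(3) by blast
        then have "i' = n - Suc t" using S_inj[of i' "n - Suc t"] x sL n2 by auto
        then show ?thesis using i' t k by auto
      qed
    qed
  next
    case (cB a c j)
    then show ?thesis using S_ne_imd[OF sL cB(5-7)] by simp
  next
    case (cC a c j)
    then show ?thesis using S_ne_imd[OF sL cC(5-7)] by simp
  qed
qed

end


context netw begin

abbreviation "sn \<equiv> (mp_var (Inl (S n)) :: ('s + 'c rlabel) mpoly)"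

lemma base: "IHp 0 (Ke 0) (good Y 0 (S n)) sn"
proof -
  have K0: "Ke 0 = Poly_Mapping.single (Inl (S n)) 1" by (simp add: Ke_def Q_def)
  have sp0: "sp (Ke 0) = good Y 0 (S n)" using sp_Ke[of 0] by simp
  have "A 0 0 (S n)" by (rule AS) auto
  then have "Inv 0 (good Y 0 (S n))" using SY[OF n2] unfolding Inv_def by blast
  then show ?thesis unfolding IHp_def mp_var_def
    using K0 sp0 by (auto simp: lookup_single when_def)
qed

lemma chain: "t \<le> k \<Longrightarrow> IHp (2*t) (Ke t) (good Y t (S (n-t))) ((D ^^ (2*t)) sn)"
proof (induction t)
  case 0
  then show ?case using base by simp
next
  case (Suc t)
  then have t: "t < k" by simp
  have "IHp (Suc (2*t)) (Ko t) (good Y t (U (n-t))) (D ((D ^^ (2*t)) sn))"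
    using transE1[OF t] Suc by simp
  from transO[OF t this] show ?case by simp
qed

lemma odd_l: "t < k \<Longrightarrow> IHp (Suc (2*t)) (Ko t) (good Y t (U (n-t))) ((D ^^ Suc (2*t)) sn)"
  using transE1 chain by simp

lemma fin: "IHp (Suc (2*k)) KV (good Y k V) ((D ^^ Suc (2*k)) sn)"
  using transE2 chain[of k] by simp

lemma Inv_all: assumes "l \<le> 2*k+1" "\<mu> \<in> Poly_Mapping.keys ((D ^^ l) sn)" shows "Inv l (sp \<mu>)"
proof -
  have "\<exists>t. l = 2*t \<or> l = Suc (2*t)" by presburger
  then obtain t where "l = 2*t \<or> l = Suc (2*t)" by blast
  then show ?thesis
  proof
    assume l: "l = 2*t"
    then have "t \<le> k" using assms by simp
    then show ?thesis using chain[of t] assms l unfolding IHp_def by blast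
  next
    assume l: "l = Suc (2*t)"
    then have "t \<le> k" using assms by simp
    then consider "t < k" | "t = k" by linarith
    then show ?thesis
    proof cases
      case 1 then show ?thesis using odd_l[of t] assms l unfolding IHp_def by blast
    next
      case 2 then show ?thesis using fin assms l unfolding IHp_def by blast
    qed
  qed
qed

lemma Inv_goodA: "x \<noteq> Y \<Longrightarrow> Inv l (good Y a x) \<Longrightarrow> A l a x"
  unfolding Inv_def using Bad_not_good good_inj by metis

abbreviation "mon r \<equiv> Poly_Mapping.single (Inl Y) r + Poly_Mapping.single (Inl V) 1 :: ('s + 'c rlabel \<Rightarrow>\<^sub>0 nat)"

lemma sp_mon: "sp (mon r) = good Y r V"
  using VY by (auto simp: sp_def good_def fun_eq_iff lookup_add lookup_single when_def)

lemma spe: "species_part_eq \<mu> m \<longleftrightarrow> sp \<mu> = sp m"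
  by (simp add: species_part_eq_def sp_def fun_eq_iff)

lemma app_A: "l \<le> 2*k+1 \<Longrightarrow> appears ((D ^^ l) sn) (mon r) \<Longrightarrow> A l r V"
  unfolding appears_def spe sp_mon using Inv_all Inv_goodA VY by metis

lemma main_loc:
  "(\<forall>l. 0 < l \<and> l < 2 * k + 1 \<longrightarrow> (\<forall>r. \<not> appears ((D ^^ l) sn) (mon r)))
   \<and> appears ((D ^^ (2 * k + 1)) sn) (mon k)
   \<and> (\<forall>r. appears ((D ^^ (2 * k + 1)) sn) (mon r) \<longrightarrow> r = k)
   \<and> xcoeff_is_monomial ((D ^^ (2 * k + 1)) sn) (mon k)
       (rvar (c2, L + 1 - (n - k), RB) + (\<Sum>j<k. rvar (c1, n - j, RA) + rvar (c1, n - j, RC)))"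
proof (intro conjI allI impI)
  fix l r assume l: "0 < l \<and> l < 2 * k + 1"
  show "\<not> appears ((D ^^ l) sn) (mon r)"
  proof
    assume "appears ((D ^^ l) sn) (mon r)"
    then have "A l r V" using app_A l by simp
    from A_V[OF this] show False using l by simp
  qed
next
  fix r assume "appears ((D ^^ (2 * k + 1)) sn) (mon r)"
  then have "A (2*k+1) r V" using app_A by simp
  from A_V[OF this] show "r = k" by simp
next
  have IH: "IHp (2*k+1) KV (good Y k V) ((D ^^ (2*k+1)) sn)" using fin by simp
  have lk: "Poly_Mapping.lookup ((D ^^ (2*k+1)) sn) KV = 1" using IH sp_KV unfolding IHp_def by simp
  show "appears ((D ^^ (2 * k + 1)) sn) (mon k)"
    unfolding appears_def spe sp_mon
    using lk sp_KV by (intro bexI[of _ KV]) (auto simp: in_keys_iff)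
  have KVe: "KV = mon k + (rvar (c2, L + 1 - (n - k), RB) + (\<Sum>j<k. rvar (c1, n - j, RA) + rvar (c1, n - j, RC)))"
    by (simp add: KV_def Q_def)
  show "xcoeff_is_monomial ((D ^^ (2 * k + 1)) sn) (mon k)
       (rvar (c2, L + 1 - (n - k), RB) + (\<Sum>j<k. rvar (c1, n - j, RA) + rvar (c1, n - j, RC)))"
    unfolding xcoeff_is_monomial_def spe sp_mon
    using IH unfolding IHp_def KVe by simp
qed

end

theorem mainTheorem14:
  fixes C :: "'c set" and enz :: "'c \<Rightarrow> 's" and sub imd :: "'c \<Rightarrow> nat \<Rightarrow> 's"
    and len :: "'c \<Rightarrow> nat" and c1 c2 :: 'c and L n k :: nat
  assumes h1: "H1 C enz sub imd len"
    and h2: "H2 C enz sub imd len"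
    and c1: "c1 \<in> C" and c2: "c2 \<in> C"
    and L: "1 \<le> L" and len1: "len c1 = L" and len2: "len c2 = L"
    and rev: "\<forall>i\<le>L. sub c2 i = sub c1 (L - i)"
    and n: "1 \<le> n" "n \<le> L" and k: "k < n"
  shows
    "(let D = tderiv C enz sub imd len;
          s_n = mp_var (Inl (sub c1 n));
          Y = enz c1;
          V = imd c2 (L + 1 - (n - k));
          mon = (\<lambda>r. Poly_Mapping.single (Inl Y) r + Poly_Mapping.single (Inl V) 1)
      in (\<forall>l. 0 < l \<and> l < 2 * k + 1 \<longrightarrow> (\<forall>r. \<not> appears ((D ^^ l) s_n) (mon r)))
         \<and> appears ((D ^^ (2 * k + 1)) s_n) (mon k)
         \<and> (\<forall>r. appears ((D ^^ (2 * k + 1)) s_n) (mon r) \<longrightarrow> r = k)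
         \<and> xcoeff_is_monomial ((D ^^ (2 * k + 1)) s_n) (mon k)
             (rvar (c2, L + 1 - (n - k), RB)
              + (\<Sum>j<k. rvar (c1, n - j, RA) + rvar (c1, n - j, RC))))"
proof -
  interpret netw C enz sub imd len c1 c2 L n k
    by (unfold_locales) (use assms in auto)
  show ?thesis unfolding Let_def using main_loc by simp
qed


end
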